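(* Let $k\ge1$, $\lambda>0$, $0<\theta<1$, $F(x,y,\theta)=\frac{1+x+\theta y}{1+x+y}$. Suppose the system $( * )$: $z^-_1=\lambda F(z^-_1,z^+_2,\theta)^k$, $z^+_1=\lambda F(z^+_1,z^-_2,\theta)^k$, $z^-_2=\lambda F(z^-_2,z^+_1,\theta)^k$, $z^+_2=\lambda F(z^+_2,z^-_1,\theta)^k$ has exactly one solution in $(0,\infty)^4$. Then the system $( ** )$: $z_{1,i}=\lambda\prod_{j\in S(i)}F(z_{1,j},z_{2,j},\theta)$, $z_{2,i}=\lambda\prod_{j\in S(i)}F(z_{2,j},z_{1,j},\theta)$ for all $i\in\mathbb{T}^k$, has exactly one positive solution $(z_{1,i},z_{2,i})_{i\in\mathbb{T}^k}$; this solution does not depend on $i$, and its common value is the unique positive solution $(x,y)$ of $x=\lambda F(x,y,\theta)^k$, $y=\lambda F(y,x,\theta)^k$.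
   Context: $\mathbb{T}^k$ is the rooted Cayley tree of order $k$; $S(i)$ is the set of the $k$ direct successors of vertex $i$. *)

theory Defs
  imports Main Complex_Main
begin

definition F :: "real \<Rightarrow> real \<Rightarrow> real \<Rightarrow> real" where
  "F x y \<theta> = (1 + x + \<theta> * y) / (1 + x + y)"

text \<open>Rooted Cayley tree of order k: vertices are finite words over {0..<k},
  the root is the empty word, and the direct successors of a vertex i are i@[j], j<k.\<close>
definition cayley_vertices :: "nat \<Rightarrow> nat list set" where
  "cayley_vertices k = {xs. \<forall>j\<in>set xs. j < k}"

definition succs :: "nat \<Rightarrow> nat list \<Rightarrow> nat list set" where
  "succs k i = {i @ [j] | j. j < k}"

definition tree_solution ::
  "nat \<Rightarrow> real \<Rightarrow> real \<Rightarrow> (nat list \<Rightarrow> real) \<Rightarrow> (nat list \<Rightarrow> real) \<Rightarrow> bool" where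
  "tree_solution k lam \<theta> z1 z2 \<longleftrightarrow>
     (\<forall>i\<in>cayley_vertices k.
        z1 i > 0 \<and> z2 i > 0 \<and>
        z1 i = lam * (\<Prod>j\<in>succs k i. F (z1 j) (z2 j) \<theta>) \<and>
        z2 i = lam * (\<Prod>j\<in>succs k i. F (z2 j) (z1 j) \<theta>))"

definition four_system :: "nat \<Rightarrow> real \<Rightarrow> real \<Rightarrow> real \<Rightarrow> real \<Rightarrow> real \<Rightarrow> real \<Rightarrow> bool" where
  "four_system k lam \<theta> zm1 zp1 zm2 zp2 \<longleftrightarrow>
     zm1 = lam * F zm1 zp2 \<theta> ^ k \<and> zp1 = lam * F zp1 zm2 \<theta> ^ k \<and>
     zm2 = lam * F zm2 zp1 \<theta> ^ k \<and> zp2 = lam * F zp2 zm1 \<theta> ^ k"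

definition two_system :: "nat \<Rightarrow> real \<Rightarrow> real \<Rightarrow> real \<Rightarrow> real \<Rightarrow> bool" where
  "two_system k lam \<theta> x y \<longleftrightarrow> x = lam * F x y \<theta> ^ k \<and> y = lam * F y x \<theta> ^ k"

end

theory Submission
  imports Defs
begin


lemma F_pos: "0\<le>x \<Longrightarrow> 0\<le>y \<Longrightarrow> 0\<le>\<theta> \<Longrightarrow> 0 < F x y \<theta>"
  unfolding F_def by (intro divide_pos_pos) (auto intro: add_pos_nonneg)

lemma F_le1: "0\<le>x \<Longrightarrow> 0\<le>y \<Longrightarrow> \<theta>\<le>1 \<Longrightarrow> F x y \<theta> \<le> 1"
  unfolding F_def using mult_right_mono[of \<theta> 1 y] by (simp add: divide_le_eq_1)

lemma F_mono:
  assumes "0\<le>x" "x\<le>x'" "0\<le>y'" "y'\<le>y" "0\<le>\<theta>" "\<theta>\<le>1"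
  shows "F x y \<theta> \<le> F x' y' \<theta>"
proof -
  have e: "F a b \<theta> = 1 - (1-\<theta>) * (b/(1+a+b))" if "0\<le>a" "0\<le>b" for a b
    using that unfolding F_def by (simp add: field_simps)
  have "y' * x \<le> y * x'" using assms by (intro mult_mono) auto
  hence "y' * (1+x+y) \<le> y*(1+x'+y')" using assms by (simp add: algebra_simps)
  hence "y'/(1+x'+y') \<le> y/(1+x+y)" using assms by (simp add: divide_simps)
  hence "(1-\<theta>) * (y'/(1+x'+y')) \<le> (1-\<theta>) * (y/(1+x+y))" using assms by (intro mult_left_mono) auto
  thus ?thesis using assms e[of x y] e[of x' y'] by simp
qed

lemma succs_img: "succs k i = (\<lambda>j. i @ [j]) ` {..<k}"
  unfolding succs_def by auto

lemma card_succs: "card (succs k i) = k"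
  unfolding succs_img by (subst card_image) (auto simp: inj_on_def)

lemma finite_succs: "finite (succs k i)"
  unfolding succs_img by auto

lemma succs_in: "i \<in> cayley_vertices k \<Longrightarrow> j \<in> succs k i \<Longrightarrow> j \<in> cayley_vertices k"
  unfolding succs_def cayley_vertices_def by auto


lemma four_swap: "four_system k lam \<theta> a b c d \<Longrightarrow> four_system k lam \<theta> b a d c"
  unfolding four_system_def by (elim conjE) (intro conjI; assumption)
lemma four_of_two: "two_system k lam \<theta> x y \<Longrightarrow> four_system k lam \<theta> x x y y"
  unfolding four_system_def two_system_def by (elim conjE) (intro conjI; assumption)
lemma two_of_four: "four_system k lam \<theta> a b c d \<Longrightarrow> two_system k lam \<theta> a d"
  unfolding four_system_def two_system_def by (elim conjE) (intro conjI; assumption)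
lemma two_swap: "two_system k lam \<theta> x y \<Longrightarrow> two_system k lam \<theta> y x"
  unfolding two_system_def by (elim conjE) (intro conjI; assumption)

lemma prod_bounds:
  assumes A: "\<forall>j\<in>A. lo \<le> a j \<and> a j \<le> hi \<and> lo \<le> b j \<and> b j \<le> hi" and "0\<le>lo" "0\<le>\<theta>" "\<theta>\<le>1"
  shows "(\<Prod>j\<in>A. F lo hi \<theta>) \<le> (\<Prod>j\<in>A. F (a j) (b j) \<theta>)"
    and "(\<Prod>j\<in>A. F (a j) (b j) \<theta>) \<le> (\<Prod>j\<in>A. F hi lo \<theta>)"
proof -
  show "(\<Prod>j\<in>A. F lo hi \<theta>) \<le> (\<Prod>j\<in>A. F (a j) (b j) \<theta>)"
  proof (rule prod_mono)
    fix j assume "j \<in> A"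
    then have b: "lo \<le> a j" "a j \<le> hi" "lo \<le> b j" "b j \<le> hi" using A by blast+
    have "0 < F lo hi \<theta>" using F_pos[of lo hi \<theta>] b assms by linarith
    moreover have "F lo hi \<theta> \<le> F (a j) (b j) \<theta>" using F_mono[of lo "a j" "b j" hi \<theta>] b assms by linarith
    ultimately show "0 \<le> F lo hi \<theta> \<and> F lo hi \<theta> \<le> F (a j) (b j) \<theta>" by simp
  qed
  show "(\<Prod>j\<in>A. F (a j) (b j) \<theta>) \<le> (\<Prod>j\<in>A. F hi lo \<theta>)"
  proof (rule prod_mono)
    fix j assume "j \<in> A"
    then have b: "lo \<le> a j" "a j \<le> hi" "lo \<le> b j" "b j \<le> hi" using A by blast+
    have "0 < F (a j) (b j) \<theta>" using F_pos[of "a j" "b j" \<theta>] b assms by linarith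
    moreover have "F (a j) (b j) \<theta> \<le> F hi lo \<theta>" using F_mono[of "a j" hi lo "b j" \<theta>] b assms by linarith
    ultimately show "0 \<le> F (a j) (b j) \<theta> \<and> F (a j) (b j) \<theta> \<le> F hi lo \<theta>" by simp
  qed
qed

primrec itr :: "nat \<Rightarrow> real \<Rightarrow> real \<Rightarrow> nat \<Rightarrow> real \<times> real" where
  "itr k lam \<theta> 0 = (0, lam)"
| "itr k lam \<theta> (Suc n) = (lam * F (fst (itr k lam \<theta> n)) (snd (itr k lam \<theta> n)) \<theta> ^ k,
                           lam * F (snd (itr k lam \<theta> n)) (fst (itr k lam \<theta> n)) \<theta> ^ k)"

lemma prod_const_succs: "(\<Prod>j\<in>succs k i. c) = c ^ k"
  by (simp add: card_succs)

theorem mainTheorem14: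
  fixes k :: nat and lam \<theta> :: real
  assumes "k \<ge> 1" and "lam > 0" and "0 < \<theta>" and "\<theta> < 1"
    and "\<exists>!z :: real \<times> real \<times> real \<times> real.
           (case z of (zm1, zp1, zm2, zp2) \<Rightarrow>
             zm1 > 0 \<and> zp1 > 0 \<and> zm2 > 0 \<and> zp2 > 0 \<and> four_system k lam \<theta> zm1 zp1 zm2 zp2)"
  shows "\<exists>x y. x > 0 \<and> y > 0 \<and> two_system k lam \<theta> x y
           \<and> (\<forall>x' y'. x' > 0 \<and> y' > 0 \<and> two_system k lam \<theta> x' y' \<longrightarrow> x' = x \<and> y' = y)
           \<and> (\<exists>z1 z2. tree_solution k lam \<theta> z1 z2)
           \<and> (\<forall>z1 z2. tree_solution k lam \<theta> z1 z2 \<longrightarrow>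
                 (\<forall>i\<in>cayley_vertices k. z1 i = x \<and> z2 i = y))"
proof -
  let ?P = "\<lambda>z :: real \<times> real \<times> real \<times> real. (case z of (zm1, zp1, zm2, zp2) \<Rightarrow>
             zm1 > 0 \<and> zp1 > 0 \<and> zm2 > 0 \<and> zp2 > 0 \<and> four_system k lam \<theta> zm1 zp1 zm2 zp2)"
  from assms(5) obtain z0 where z0: "?P z0" and uq0: "\<And>z. ?P z \<Longrightarrow> z = z0"
    by (elim ex1E) blast
  obtain a b c d where zd: "z0 = (a,b,c,d)" by (cases z0) auto
  have abcd: "?P (a,b,c,d)" using z0 zd by simp
  have uq: "\<And>z. ?P z \<Longrightarrow> z = (a,b,c,d)" using uq0 zd by simp
  have "?P (b,a,d,c)" using abcd four_swap[of k lam \<theta> a b c d] by simp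
  hence "(b,a,d,c) = (a,b,c,d)" by (rule uq[of "(b,a,d,c)"])
  hence ab: "b = a" "d = c" by (metis prod.inject)+
  have two: "two_system k lam \<theta> a c" "a > 0" "c > 0"
    using abcd two_of_four[of k lam \<theta> a b c d] by (simp_all add: ab)
  have tuq: "x' = a \<and> y' = c" if "x' > 0" "y' > 0" "two_system k lam \<theta> x' y'" for x' y'
  proof -
    have "?P (x',x',y',y')" using that four_of_two[of k lam \<theta> x' y'] by simp
    hence "(x',x',y',y') = (a,b,c,d)" by (rule uq[of "(x',x',y',y')"])
    thus ?thesis using ab by (metis prod.inject)
  qed
  have "two_system k lam \<theta> c a" using two(1) by (rule two_swap)
  hence ac: "c = a" using tuq[of c a] two by blast
  have th: "0 \<le> \<theta>" "\<theta> \<le> 1" using assms by auto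
  define l where "l n = fst (itr k lam \<theta> n)" for n
  define u where "u n = snd (itr k lam \<theta> n)" for n
  have lS: "l (Suc n) = lam * F (l n) (u n) \<theta> ^ k" and uS: "u (Suc n) = lam * F (u n) (l n) \<theta> ^ k" for n
    by (simp_all add: l_def u_def)
  have nn: "0 \<le> l n \<and> 0 \<le> u n" for n
  proof (induction n)
    case 0 then show ?case using assms by (simp add: l_def u_def)
  next
    case (Suc n)
    then show ?case using F_pos[of "l n" "u n" \<theta>] F_pos[of "u n" "l n" \<theta>] th assms(2)
      by (simp add: lS uS)
  qed
  have bd: "l n \<le> lam \<and> u n \<le> lam" for n
  proof (cases n)
    case 0 then show ?thesis using assms by (simp add: l_def u_def)
  next
    case (Suc m)
    have "F (l m) (u m) \<theta> ^ k \<le> 1" "F (u m) (l m) \<theta> ^ k \<le> 1"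
      using nn[of m] F_pos[of "l m" "u m" \<theta>] F_pos[of "u m" "l m" \<theta>] F_le1[of "l m" "u m" \<theta>] F_le1[of "u m" "l m" \<theta>] th
      by (auto intro: power_le_one)
    then show ?thesis using Suc lS uS assms(2)
      by (metis mult_left_le mult_le_cancel_left1 less_le)
  qed
  have mono: "l n \<le> l (Suc n) \<and> u (Suc n) \<le> u n" for n
  proof (induction n)
    case 0 then show ?case using nn[of 1] bd[of 1] by (simp add: l_def u_def)
  next
    case (Suc n)
    have "F (l n) (u n) \<theta> \<le> F (l (Suc n)) (u (Suc n)) \<theta>"
      using Suc nn[of n] nn[of "Suc n"] th by (intro F_mono) auto
    hence 1: "F (l n) (u n) \<theta> ^ k \<le> F (l (Suc n)) (u (Suc n)) \<theta> ^ k"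
      using nn[of n] th F_pos[of "l n" "u n" \<theta>] by (intro power_mono) auto
    have "F (u (Suc n)) (l (Suc n)) \<theta> \<le> F (u n) (l n) \<theta>"
      using Suc nn[of n] nn[of "Suc n"] th by (intro F_mono) auto
    hence 2: "F (u (Suc n)) (l (Suc n)) \<theta> ^ k \<le> F (u n) (l n) \<theta> ^ k"
      using nn[of "Suc n"] th F_pos[of "u (Suc n)" "l (Suc n)" \<theta>] by (intro power_mono) auto
    show ?case using 1 2 assms(2) lS[of n] lS[of "Suc n"] uS[of n] uS[of "Suc n"]
      by (simp add: mult_left_mono)
  qed
  have "incseq l" using mono by (simp add: incseq_SucI)
  moreover have "bdd_above (range l)" using bd by (intro bdd_aboveI[of _ lam]) auto
  ultimately obtain L where Ll: "l \<longlonglongrightarrow> L" using LIMSEQ_incseq_SUP by blast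
  have "decseq u" using mono by (simp add: decseq_SucI)
  moreover have "bdd_below (range u)" using nn by (intro bdd_belowI[of _ 0]) auto
  ultimately obtain U where Uu: "u \<longlonglongrightarrow> U" using LIMSEQ_decseq_INF by blast
  have L0: "0 \<le> L" using Ll nn by (intro LIMSEQ_le_const) auto
  have U0: "0 \<le> U" using Uu nn by (intro LIMSEQ_le_const) auto
  have Fc: "(\<lambda>n. lam * F (f n) (g n) \<theta> ^ k) \<longlonglongrightarrow> lam * F A B \<theta> ^ k"
    if "f \<longlonglongrightarrow> A" "g \<longlonglongrightarrow> B" "0 \<le> A" "0 \<le> B" for f g A B
    unfolding F_def using that by (intro tendsto_intros) auto
  have "(\<lambda>n. l (Suc n)) \<longlonglongrightarrow> L" using Ll by (rule LIMSEQ_Suc)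
  moreover have "(\<lambda>n. l (Suc n)) \<longlonglongrightarrow> lam * F L U \<theta> ^ k" unfolding lS by (rule Fc[OF Ll Uu L0 U0])
  ultimately have Leq: "L = lam * F L U \<theta> ^ k" by (rule LIMSEQ_unique)
  have "(\<lambda>n. u (Suc n)) \<longlonglongrightarrow> U" using Uu by (rule LIMSEQ_Suc)
  moreover have "(\<lambda>n. u (Suc n)) \<longlonglongrightarrow> lam * F U L \<theta> ^ k" unfolding uS by (rule Fc[OF Uu Ll U0 L0])
  ultimately have Ueq: "U = lam * F U L \<theta> ^ k" by (rule LIMSEQ_unique)
  have "L > 0" using Leq F_pos[OF L0 U0 th(1)] assms(2) by (metis zero_less_power mult_pos_pos)
  moreover have "U > 0" using Ueq F_pos[OF U0 L0 th(1)] assms(2) by (metis zero_less_power mult_pos_pos)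
  moreover have "two_system k lam \<theta> L U" unfolding two_system_def using Leq Ueq by (rule conjI)
  ultimately have LU: "L = a" "U = a" using tuq[of L U] ac by blast+
  have treeU: "z1 i = a \<and> z2 i = a" if ts: "tree_solution k lam \<theta> z1 z2" and iV: "i \<in> cayley_vertices k" for z1 z2 i
  proof -
    have inv: "\<forall>i\<in>cayley_vertices k. l n \<le> z1 i \<and> z1 i \<le> u n \<and> l n \<le> z2 i \<and> z2 i \<le> u n" for n
    proof (induction n)
      case 0
      show ?case
      proof
        fix i assume iV: "i \<in> cayley_vertices k"
        have pos: "z1 i > 0" "z2 i > 0" and eqs: "z1 i = lam * (\<Prod>j\<in>succs k i. F (z1 j) (z2 j) \<theta>)"
          "z2 i = lam * (\<Prod>j\<in>succs k i. F (z2 j) (z1 j) \<theta>)" using ts iV unfolding tree_solution_def by blast+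
        have jp: "z1 j > 0" "z2 j > 0" if "j \<in> succs k i" for j
          using ts succs_in[OF iV that] unfolding tree_solution_def by blast+
        have le1: "(\<Prod>j\<in>succs k i. F (z1 j) (z2 j) \<theta>) \<le> 1"
          using jp F_pos F_le1 th by (intro prod_le_1) (meson less_imp_le)
        have le2: "(\<Prod>j\<in>succs k i. F (z2 j) (z1 j) \<theta>) \<le> 1"
          using jp F_pos F_le1 th by (intro prod_le_1) (meson less_imp_le)
        show "l 0 \<le> z1 i \<and> z1 i \<le> u 0 \<and> l 0 \<le> z2 i \<and> z2 i \<le> u 0"
        proof -
          have "z1 i \<le> lam" "z2 i \<le> lam" using eqs le1 le2 assms(2)
            by (metis mult_left_le less_le)+
          then show ?thesis using pos by (simp add: l_def u_def)
        qed
      qed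
    next
      case (Suc n)
      show ?case
      proof
        fix i assume iV: "i \<in> cayley_vertices k"
        have eqs: "z1 i = lam * (\<Prod>j\<in>succs k i. F (z1 j) (z2 j) \<theta>)"
          "z2 i = lam * (\<Prod>j\<in>succs k i. F (z2 j) (z1 j) \<theta>)" using ts iV unfolding tree_solution_def by blast+
        have jb: "\<forall>j\<in>succs k i. l n \<le> z1 j \<and> z1 j \<le> u n \<and> l n \<le> z2 j \<and> z2 j \<le> u n"
          using Suc succs_in[OF iV] by auto
        have jb2: "\<forall>j\<in>succs k i. l n \<le> z2 j \<and> z2 j \<le> u n \<and> l n \<le> z1 j \<and> z1 j \<le> u n"
          using jb by blast
        note p1 = prod_bounds(1)[OF jb conjunct1[OF nn[of n]] th]
        note p2 = prod_bounds(2)[OF jb conjunct1[OF nn[of n]] th]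
        note p3 = prod_bounds(1)[OF jb2 conjunct1[OF nn[of n]] th]
        note p4 = prod_bounds(2)[OF jb2 conjunct1[OF nn[of n]] th]
        show "l (Suc n) \<le> z1 i \<and> z1 i \<le> u (Suc n) \<and> l (Suc n) \<le> z2 i \<and> z2 i \<le> u (Suc n)"
          unfolding lS uS eqs using p1 p2 p3 p4 assms(2)
          by (simp add: card_succs)
      qed
    qed
    have "L \<le> z1 i" "z1 i \<le> U" "L \<le> z2 i" "z2 i \<le> U" using inv iV
      by (auto intro: LIMSEQ_le_const2[OF Ll] LIMSEQ_le_const[OF Uu])
    then show ?thesis using LU by auto
  qed
  have ex: "tree_solution k lam \<theta> (\<lambda>_. a) (\<lambda>_. a)"
  proof -
    have h: "a = lam * F a a \<theta> ^ k" using two(1) unfolding ac two_system_def by (rule conjunct1)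
    show ?thesis unfolding tree_solution_def prod_const_succs
      by (intro ballI conjI; (rule h | rule two(2)))
  qed
  have A: "\<forall>x' y'. x' > 0 \<and> y' > 0 \<and> two_system k lam \<theta> x' y' \<longrightarrow> x' = a \<and> y' = a"
    using tuq ac by blast
  have B: "\<forall>z1 z2. tree_solution k lam \<theta> z1 z2 \<longrightarrow> (\<forall>i\<in>cayley_vertices k. z1 i = a \<and> z2 i = a)"
    using treeU by blast
  have C: "two_system k lam \<theta> a a" using two(1) unfolding ac .
  show ?thesis using two(2) A B C ex by blast
qed

end
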